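(* Let $(N,\langle\cdot,\cdot\rangle)$ be a 2-step nilpotent Lie group with a left-invariant Riemannian metric whose Lie algebra $\mathfrak n$ is either non-singular or almost non-singular. Then every left-invariant skew-symmetric $(1,1)$-tensor $F$ on $N$ of type II whose associated 2-form $\omega=\langle F\cdot,\cdot\rangle$ is closed and which is parallel ($\nabla F=0$, $\nabla$ the Levi-Civita connection) is identically zero.
   Context: A real Lie algebra is 2-step nilpotent if $[[U,V],W]=0$ for all $U,V,W$. Let $\mathfrak z$ be the center, $\mathfrak v=\mathfrak z^\perp$, and for $Z\in\mathfrak z$ define $j_Z:\mathfrak v\to\mathfrak v$ by $\langle j_ZV,W\rangle=\langle Z,[V,W]\rangle$. $\mathfrak n$ is non-singular if $j_Z$ is invertible for every nonzero $Z\in\mathfrak z$; it is almost non-singular if there exist $Z,\tilde Z\in\mathfrak z$ with $j_Z$ invertible and $j_{\tilde Z}$ singular. $F$ (identified with a skew-symmetric endomorphism of $\mathfrak n$) is of type II if $F(\mathfrak v)\subseteq\mathfrak z$ and $F(\mathfrak z)\subseteq\mathfrak v$. Closedness of a left-invariant 2-form means $\omega([U,V],W)+\omega([V,W],U)+\omega([W,U],V)=0$ for all $U,V,W\in\mathfrak n$. *)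

theory Defs
  imports "HOL-Analysis.Analysis"
begin

text \<open>A metric Lie algebra: the underlying space is a finite-dimensional real inner
product space (type class euclidean_space; its inner product is the left-invariant
metric), with a bracket br.\<close>

definition lie_algebra :: "('a::euclidean_space \<Rightarrow> 'a \<Rightarrow> 'a) \<Rightarrow> bool" where
  "lie_algebra br \<longleftrightarrow> bilinear br \<and> (\<forall>U V. br U V = - br V U)
     \<and> (\<forall>U V W. br (br U V) W + br (br V W) U + br (br W U) V = 0)"

definition two_step_nilpotent :: "('a::euclidean_space \<Rightarrow> 'a \<Rightarrow> 'a) \<Rightarrow> bool" where
  "two_step_nilpotent br \<longleftrightarrow> (\<forall>U V W. br (br U V) W = 0)"

definition center :: "('a::euclidean_space \<Rightarrow> 'a \<Rightarrow> 'a) \<Rightarrow> 'a set" where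
  "center br = {Z. \<forall>V. br Z V = 0}"

definition vpart :: "('a::euclidean_space \<Rightarrow> 'a \<Rightarrow> 'a) \<Rightarrow> 'a set" where
  "vpart br = {V. \<forall>Z\<in>center br. inner V Z = 0}"

text \<open>j_Z V is the unique vector with inner (j_Z V) W = inner Z [V,W] for all W
(it lies in v since [V,W] = 0 for W central); we restrict it to v.\<close>
definition jmap :: "('a::euclidean_space \<Rightarrow> 'a \<Rightarrow> 'a) \<Rightarrow> 'a \<Rightarrow> 'a \<Rightarrow> 'a" where
  "jmap br Z V = (\<Sum>b\<in>Basis. inner Z (br V b) *\<^sub>R b)"

definition j_invertible :: "('a::euclidean_space \<Rightarrow> 'a \<Rightarrow> 'a) \<Rightarrow> 'a \<Rightarrow> bool" where
  "j_invertible br Z \<longleftrightarrow> bij_betw (jmap br Z) (vpart br) (vpart br)"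

definition non_singular :: "('a::euclidean_space \<Rightarrow> 'a \<Rightarrow> 'a) \<Rightarrow> bool" where
  "non_singular br \<longleftrightarrow> (\<forall>Z\<in>center br. Z \<noteq> 0 \<longrightarrow> j_invertible br Z)"

definition almost_non_singular :: "('a::euclidean_space \<Rightarrow> 'a \<Rightarrow> 'a) \<Rightarrow> bool" where
  "almost_non_singular br \<longleftrightarrow>
     (\<exists>Z\<in>center br. \<exists>Z'\<in>center br. j_invertible br Z \<and> \<not> j_invertible br Z')"

text \<open>Levi-Civita connection of the left-invariant metric on left-invariant fields
(Koszul formula): inner (nabla U V) W = 1/2 (<[U,V],W> - <[V,W],U> + <[W,U],V>).\<close>
definition nabla :: "('a::euclidean_space \<Rightarrow> 'a \<Rightarrow> 'a) \<Rightarrow> 'a \<Rightarrow> 'a \<Rightarrow> 'a" where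
  "nabla br U V = (\<Sum>b\<in>Basis.
      ((1/2) * (inner (br U V) b - inner (br V b) U + inner (br b U) V)) *\<^sub>R b)"

definition skew_symmetric :: "('a::euclidean_space \<Rightarrow> 'a) \<Rightarrow> bool" where
  "skew_symmetric F \<longleftrightarrow> linear F \<and> (\<forall>U V. inner (F U) V = - inner U (F V))"

definition type_II :: "('a::euclidean_space \<Rightarrow> 'a \<Rightarrow> 'a) \<Rightarrow> ('a \<Rightarrow> 'a) \<Rightarrow> bool" where
  "type_II br F \<longleftrightarrow> F ` vpart br \<subseteq> center br \<and> F ` center br \<subseteq> vpart br"

definition form_closed :: "('a::euclidean_space \<Rightarrow> 'a \<Rightarrow> 'a) \<Rightarrow> ('a \<Rightarrow> 'a \<Rightarrow> real) \<Rightarrow> bool" where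
  "form_closed br \<omega> \<longleftrightarrow>
     (\<forall>U V W. \<omega> (br U V) W + \<omega> (br V W) U + \<omega> (br W U) V = 0)"

definition parallel :: "('a::euclidean_space \<Rightarrow> 'a \<Rightarrow> 'a) \<Rightarrow> ('a \<Rightarrow> 'a) \<Rightarrow> bool" where
  "parallel br F \<longleftrightarrow> (\<forall>U V. nabla br U (F V) - F (nabla br U V) = 0)"

end

theory Submission
  imports Defs
begin

theorem mainTheorem6:
  fixes br :: "'a::euclidean_space \<Rightarrow> 'a \<Rightarrow> 'a" and F :: "'a \<Rightarrow> 'a"
  assumes "lie_algebra br"
    and "two_step_nilpotent br"
    and "non_singular br \<or> almost_non_singular br"
    and "skew_symmetric F"
    and "type_II br F"
    and "form_closed br (\<lambda>X Y. inner (F X) Y)"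
    and "parallel br F"
  shows "F = (\<lambda>X. 0)"
proof -
  have bil: "bilinear br" and sk: "\<And>U V. br U V = - br V U"
    using assms(1) unfolding lie_algebra_def by blast+
  have lin: "linear F" and skF: "\<And>U V. inner (F U) V = - inner U (F V)"
    using assms(4) unfolding skew_symmetric_def by blast+
  have cen: "br U V \<in> center br" for U V
    using assms(2) unfolding two_step_nilpotent_def center_def by auto
  have cen2: "br V Z = 0" if "Z \<in> center br" for Z V
    using that sk[of V Z] unfolding center_def by auto
  have nz: "\<exists>Z\<in>center br. Z \<noteq> 0"
  proof (rule ccontr)
    assume "\<not> ?thesis"
    then have c0: "center br \<subseteq> {0}" by auto
    have "\<forall>U V. br U V = 0" using cen c0 by blast
    then have "center br = UNIV" unfolding center_def by auto
    moreover obtain b :: 'a where "b \<in> Basis" using nonempty_Basis by blast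
    then have "b \<noteq> 0" by auto
    ultimately show False using c0 by auto
  qed
  obtain Z where Z: "Z \<in> center br" "j_invertible br Z"
    using assms(3) nz unfolding non_singular_def almost_non_singular_def by blast
  have nab: "nabla br Z Y = (- 1/2) *\<^sub>R jmap br Z Y" for Y
  proof -
    have "nabla br Z Y = (\<Sum>b\<in>Basis. ((- 1/2) * inner Z (br Y b)) *\<^sub>R b)"
      unfolding nabla_def
      using Z(1) cen2[OF Z(1)] unfolding center_def
      by (simp add: inner_commute)
    also have "\<dots> = (- 1/2) *\<^sub>R jmap br Z Y"
      unfolding jmap_def scaleR_sum_right by simp
    finally show ?thesis .
  qed
  have nab0: "nabla br Z W = 0" if "W \<in> center br" for W
  proof -
    have "nabla br Z W = (\<Sum>b\<in>Basis. 0 *\<^sub>R b)"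
      unfolding nabla_def
      using Z(1) cen2[OF Z(1)] cen2[OF that] that unfolding center_def
      by (intro sum.cong) (auto simp: inner_commute)
    then show ?thesis by simp
  qed
  have Fv: "F Y = 0" if "Y \<in> vpart br" for Y
  proof -
    have "Y \<in> jmap br Z ` vpart br" using Z(2) that unfolding j_invertible_def bij_betw_def by simp
    then obtain Y' where Y': "Y' \<in> vpart br" "Y = jmap br Z Y'" by blast
    have "F Y' \<in> center br" using assms(5) Y'(1) unfolding type_II_def by blast
    then have "nabla br Z (F Y') = 0" by (rule nab0)
    moreover have "nabla br Z (F Y') - F (nabla br Z Y') = 0"
      using assms(7) unfolding parallel_def by blast
    ultimately have "F (nabla br Z Y') = 0" by simp
    moreover have "F (nabla br Z Y') = (- 1/2) *\<^sub>R F (jmap br Z Y')"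
      unfolding nab by (rule linear_cmul[OF lin])
    ultimately have "(- 1/2) *\<^sub>R F (jmap br Z Y') = 0" by simp
    then show ?thesis using Y' by simp
  qed
  have Fz: "F W = 0" if "W \<in> center br" for W
  proof -
    have "F W \<in> vpart br" using assms(5) that unfolding type_II_def by blast
    then have "F (F W) = 0" by (rule Fv)
    then have "inner (F W) (F W) = 0" using skF[of W "F W"] by simp
    then show ?thesis by simp
  qed
  have sub: "subspace (center br)"
    unfolding subspace_def center_def
    using bilinear_lzero[OF bil] bilinear_ladd[OF bil] bilinear_lmul[OF bil]
    by auto
  show ?thesis
  proof
    fix X
    obtain y z where yz: "y \<in> span (center br)"
      "\<And>w. w \<in> span (center br) \<Longrightarrow> orthogonal z w" "X = y + z"
      using orthogonal_subspace_decomp_exists[of "center br" X] by metis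
    have y: "y \<in> center br" using yz(1) sub by (metis span_eq_iff)
    have z: "z \<in> vpart br" unfolding vpart_def
      using yz(2) span_base by (auto simp: orthogonal_def)
    show "F X = 0" using yz(3) Fv[OF z] Fz[OF y] linear_add[OF lin] by simp
  qed
qed

end
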